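(* If $G$ is a partial cube, then $c(G) \geq \left\lceil \frac{\delta(G)}{2} \right\rceil$.
   Context: The $n$-dimensional hypercube $Q_n$ has vertex set $\{0,1\}^n$, two strings being adjacent iff they differ in exactly one position. An induced subgraph $H$ of a graph $G$ is isometric if $d_H(u,v) = d_G(u,v)$ for all $u,v \in V(H)$. A partial cube is a connected graph isomorphic to an isometric subgraph of some hypercube $Q_n$. $\delta(G)$ is the minimum degree of $G$. Cops and Robbers on a finite simple graph $G$: $k$ cops first choose starting vertices, then the robber chooses a starting vertex; thereafter in each round all cops move (each to a neighboring vertex or staying put), then the robber moves (to a neighbor or staying put); all positions are visible to both sides. The cops win if some cop occupies the robber's vertex at some point. The cop number $c(G)$ is the minimum $k$ such that $k$ cops have a strategy guaranteeing capture. *)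

theory Defs
  imports Complex_Main
begin

definition simple_graph :: "'a set \<Rightarrow> ('a \<Rightarrow> 'a \<Rightarrow> bool) \<Rightarrow> bool" where
  "simple_graph V E \<longleftrightarrow> finite V \<and> (\<forall>u v. E u v \<longrightarrow> u \<in> V \<and> v \<in> V)
     \<and> (\<forall>u v. E u v \<longrightarrow> E v u) \<and> (\<forall>v. \<not> E v v)"

definition walk :: "'a set \<Rightarrow> ('a \<Rightarrow> 'a \<Rightarrow> bool) \<Rightarrow> 'a list \<Rightarrow> bool" where
  "walk V E xs \<longleftrightarrow> xs \<noteq> [] \<and> set xs \<subseteq> V \<and> (\<forall>i. Suc i < length xs \<longrightarrow> E (xs ! i) (xs ! Suc i))"

definition connected_graph :: "'a set \<Rightarrow> ('a \<Rightarrow> 'a \<Rightarrow> bool) \<Rightarrow> bool" where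
  "connected_graph V E \<longleftrightarrow> V \<noteq> {} \<and>
     (\<forall>u\<in>V. \<forall>v\<in>V. \<exists>xs. walk V E xs \<and> hd xs = u \<and> last xs = v)"

definition gdist :: "'a set \<Rightarrow> ('a \<Rightarrow> 'a \<Rightarrow> bool) \<Rightarrow> 'a \<Rightarrow> 'a \<Rightarrow> nat" where
  "gdist V E u v = (LEAST n. \<exists>xs. walk V E xs \<and> hd xs = u \<and> last xs = v \<and> length xs = Suc n)"

definition cube_V :: "nat \<Rightarrow> bool list set" where
  "cube_V n = {xs. length xs = n}"

definition cube_E :: "nat \<Rightarrow> bool list \<Rightarrow> bool list \<Rightarrow> bool" where
  "cube_E n xs ys \<longleftrightarrow> length xs = n \<and> length ys = n \<and>
     card {i. i < n \<and> xs ! i \<noteq> ys ! i} = 1"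

definition induced_E :: "('a \<Rightarrow> 'a \<Rightarrow> bool) \<Rightarrow> 'a set \<Rightarrow> 'a \<Rightarrow> 'a \<Rightarrow> bool" where
  "induced_E E S u v \<longleftrightarrow> u \<in> S \<and> v \<in> S \<and> E u v"

definition isometric_subgraph :: "'a set \<Rightarrow> 'a set \<Rightarrow> ('a \<Rightarrow> 'a \<Rightarrow> bool) \<Rightarrow> bool" where
  "isometric_subgraph S V E \<longleftrightarrow> S \<subseteq> V \<and>
     (\<forall>u\<in>S. \<forall>v\<in>S. gdist S (induced_E E S) u v = gdist V E u v)"

definition graph_iso :: "('a \<Rightarrow> 'b) \<Rightarrow> 'a set \<Rightarrow> ('a \<Rightarrow> 'a \<Rightarrow> bool) \<Rightarrow> 'b set \<Rightarrow> ('b \<Rightarrow> 'b \<Rightarrow> bool) \<Rightarrow> bool" where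
  "graph_iso f V E W F \<longleftrightarrow> bij_betw f V W \<and> (\<forall>u\<in>V. \<forall>v\<in>V. E u v \<longleftrightarrow> F (f u) (f v))"

definition partial_cube :: "'a set \<Rightarrow> ('a \<Rightarrow> 'a \<Rightarrow> bool) \<Rightarrow> bool" where
  "partial_cube V E \<longleftrightarrow> connected_graph V E \<and>
     (\<exists>n S f. isometric_subgraph S (cube_V n) (cube_E n) \<and>
              graph_iso f V E S (induced_E (cube_E n) S))"

definition degree :: "'a set \<Rightarrow> ('a \<Rightarrow> 'a \<Rightarrow> bool) \<Rightarrow> 'a \<Rightarrow> nat" where
  "degree V E v = card {w \<in> V. E v w}"

definition min_degree :: "'a set \<Rightarrow> ('a \<Rightarrow> 'a \<Rightarrow> bool) \<Rightarrow> nat" where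
  "min_degree V E = Min (degree V E ` V)"

text \<open>A play: C t i is the position of cop i after the cops' move in round t
  (C 0 = initial placement), R t is the robber position after his move in round t
  (R 0 = robber's initial choice).  Cop strategy: initial placement c0 and
  a function sigma from the robber history [R 0, ..., R t] to the cops' positions
  in round t+1 (the cops' own earlier positions are determined by the strategy).\<close>

definition step :: "'a set \<Rightarrow> ('a \<Rightarrow> 'a \<Rightarrow> bool) \<Rightarrow> 'a \<Rightarrow> 'a \<Rightarrow> bool" where
  "step V E x y \<longleftrightarrow> x \<in> V \<and> (y = x \<or> E x y)"

fun cop_pos :: "('a \<Rightarrow> 'a \<Rightarrow> bool) \<Rightarrow> (nat \<Rightarrow> 'a) \<Rightarrow> ('a list \<Rightarrow> nat \<Rightarrow> 'a) \<Rightarrow> (nat \<Rightarrow> 'a) \<Rightarrow> nat \<Rightarrow> nat \<Rightarrow> 'a" where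
  "cop_pos E c0 \<sigma> R 0 = c0"
| "cop_pos E c0 \<sigma> R (Suc t) = \<sigma> (map R [0..<Suc t])"

definition robber_legal :: "'a set \<Rightarrow> ('a \<Rightarrow> 'a \<Rightarrow> bool) \<Rightarrow> (nat \<Rightarrow> 'a) \<Rightarrow> bool" where
  "robber_legal V E R \<longleftrightarrow> R 0 \<in> V \<and> (\<forall>t. step V E (R t) (R (Suc t)))"

definition cops_winning_strategy ::
  "'a set \<Rightarrow> ('a \<Rightarrow> 'a \<Rightarrow> bool) \<Rightarrow> nat \<Rightarrow> (nat \<Rightarrow> 'a) \<Rightarrow> ('a list \<Rightarrow> nat \<Rightarrow> 'a) \<Rightarrow> bool" where
  "cops_winning_strategy V E k c0 \<sigma> \<longleftrightarrow>
     (\<forall>i<k. c0 i \<in> V) \<and>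
     (\<forall>R. robber_legal V E R \<longrightarrow>
        (\<forall>t. \<forall>i<k. step V E (cop_pos E c0 \<sigma> R t i) (cop_pos E c0 \<sigma> R (Suc t) i)) \<and>
        (\<exists>t. \<exists>i<k. cop_pos E c0 \<sigma> R t i = R t \<or> cop_pos E c0 \<sigma> R (Suc t) i = R t))"

definition cops_win :: "'a set \<Rightarrow> ('a \<Rightarrow> 'a \<Rightarrow> bool) \<Rightarrow> nat \<Rightarrow> bool" where
  "cops_win V E k \<longleftrightarrow> (\<exists>c0 \<sigma>. cops_winning_strategy V E k c0 \<sigma>)"

definition cop_number :: "'a set \<Rightarrow> ('a \<Rightarrow> 'a \<Rightarrow> bool) \<Rightarrow> nat" where
  "cop_number V E = (LEAST k. cops_win V E k)"

end

theory Submission imports Defs begin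

definition cD :: "nat \<Rightarrow> bool list \<Rightarrow> bool list \<Rightarrow> nat set" where
  "cD n X Y = {i. i<n \<and> X!i \<noteq> Y!i}"

lemma cube_E_iff: "cube_E n X Y \<longleftrightarrow> length X = n \<and> length Y = n \<and> (\<exists>i. cD n X Y = {i})"
  unfolding cube_E_def cD_def by (simp add: card_1_singleton_iff)

lemma cD_eq: "i \<in> cD n X Z \<longleftrightarrow> i<n \<and> ((i \<in> cD n X Y) \<noteq> (i \<in> cD n Y Z))"
  unfolding cD_def by auto

lemma cD_lt: "i \<in> cD n X Y \<Longrightarrow> i < n" unfolding cD_def by auto

lemma cD_empty: "length X = n \<Longrightarrow> length Z = n \<Longrightarrow> cD n X Z = {} \<Longrightarrow> X = Z"
  unfolding cD_def by (auto intro: nth_equalityI)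

lemma cube_no_tri: "cube_E n X Y \<Longrightarrow> cube_E n Y Z \<Longrightarrow> \<not> cube_E n X Z"
proof
  assume a: "cube_E n X Y" and b: "cube_E n Y Z" and c: "cube_E n X Z"
  obtain i j l where i: "cD n X Y = {i}" and j: "cD n Y Z = {j}" and l: "cD n X Z = {l}"
    using a b c cube_E_iff by metis
  have "i<n" "j<n" "l < n" using i j l cD_lt by (metis insertI1)+
  then show False using cD_eq[of i n X Z Y] cD_eq[of j n X Z Y] cD_eq[of l n X Z Y] i j l
    by auto
qed

lemma cube_common:
  assumes "X \<noteq> Z"
  shows "finite {y. cube_E n X y \<and> (y = Z \<or> cube_E n y Z)}
    \<and> card {y. cube_E n X y \<and> (y = Z \<or> cube_E n y Z)} \<le> 2"
proof -
  let ?T = "{y. cube_E n X y \<and> (y = Z \<or> cube_E n y Z)}"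
  have fin: "finite ?T"
  proof (rule finite_subset)
    show "?T \<subseteq> {xs. set xs \<subseteq> UNIV \<and> length xs = n}" using cube_E_iff by auto
    show "finite {xs::bool list. set xs \<subseteq> UNIV \<and> length xs = n}"
      by (rule finite_lists_length_eq) simp
  qed
  have "card ?T \<le> 2"
  proof (cases "?T = {}")
    case True then show ?thesis by (metis card.empty zero_le)
  next
    case False
    then obtain y0 where y0: "y0 \<in> ?T" by blast
    show ?thesis
    proof (cases "cube_E n X Z")
      case True
      have "?T \<subseteq> {Z}" using True cube_no_tri by blast
      then have "card ?T \<le> card {Z}" by (intro card_mono) simp_all
      then show ?thesis by simp
    next
      case False
      hence T: "?T = {y. cube_E n X y \<and> cube_E n y Z}" by auto
      have y0': "cube_E n X y0" "cube_E n y0 Z" using y0 T by auto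
      have len: "length X = n" "length Z = n" using y0' cube_E_iff by auto
      obtain i0 j0 where i0: "cD n X y0 = {i0}" and j0: "cD n y0 Z = {j0}"
        using y0' cube_E_iff by metis
      have sub2: "cD n X Z \<subseteq> {i0, j0}"
      proof
        fix m assume "m \<in> cD n X Z"
        then show "m \<in> {i0, j0}" using cD_eq[of m n X Z y0] i0 j0 by auto
      qed
      have key: "\<exists>i. cD n X y = {i} \<and> i \<in> cD n X Z" if y: "y \<in> ?T" for y
      proof -
        have yy: "cube_E n X y" "cube_E n y Z" using y T by auto
        obtain i j where i: "cD n X y = {i}" and j: "cD n y Z = {j}"
          using yy cube_E_iff by metis
        have "i < n" "j < n" using i j cD_lt by (metis insertI1)+
        have "i \<noteq> j"
        proof
          assume "i = j"
          have "m \<notin> cD n X Z" for m using cD_eq[of m n X Z y] i j \<open>i = j\<close> by auto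
          then have "cD n X Z = {}" by blast
          then show False using cD_empty len assms by blast
        qed
        then have "i \<in> cD n X Z" using cD_eq[of i n X Z y] i j \<open>i<n\<close> by auto
        then show ?thesis using i by blast
      qed
      have inj: "inj_on (cD n X) ?T"
      proof
        fix y y' assume y: "y \<in> ?T" and y': "y' \<in> ?T" and e: "cD n X y = cD n X y'"
        have ly: "length y = n" "length y' = n" using y y' cube_E_iff by auto
        show "y = y'"
        proof (rule nth_equalityI)
          show "length y = length y'" using ly by simp
          fix m assume "m < length y"
          then have m: "m < n" using ly by simp
          have "(m \<in> cD n X y) = (m \<in> cD n X y')" using e by simp
          then show "y ! m = y' ! m" using m unfolding cD_def by auto
        qed
      qed
      have finD: "finite (cD n X Z)" by (rule finite_subset[OF sub2]) simp
      have "card ?T = card (cD n X ` ?T)" using card_image[OF inj] by simp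
      also have "\<dots> \<le> card ((\<lambda>i. {i}) ` cD n X Z)"
      proof (rule card_mono)
        show "finite ((\<lambda>i. {i}) ` cD n X Z)" using finD by simp
        show "cD n X ` ?T \<subseteq> (\<lambda>i. {i}) ` cD n X Z" using key by blast
      qed
      also have "\<dots> \<le> card (cD n X Z)" using finD by (rule card_image_le)
      also have "\<dots> \<le> card {i0, j0}" by (rule card_mono) (simp_all add: sub2)
      also have "\<dots> \<le> 2" by (simp add: card_insert_if)
      finally show ?thesis .
    qed
  qed
  then show ?thesis using fin by simp
qed


lemma pc_common:
  assumes sg: "simple_graph V E" and pc: "partial_cube V E" and x: "x \<in> V" and c: "c \<noteq> x"
  shows "card {v. E x v \<and> (v = c \<or> E v c)} \<le> 2"
proof -
  obtain n S f where iso: "graph_iso f V E S (induced_E (cube_E n) S)"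
    using pc unfolding partial_cube_def by blast
  have bij: "bij_betw f V S" and
    Eiff: "\<And>u v. u\<in>V \<Longrightarrow> v\<in>V \<Longrightarrow> E u v \<longleftrightarrow> induced_E (cube_E n) S (f u) (f v)"
    using iso unfolding graph_iso_def by auto
  let ?A = "{v. E x v \<and> (v = c \<or> E v c)}"
  have AV: "?A \<subseteq> V" using sg unfolding simple_graph_def by auto
  show ?thesis
  proof (cases "c \<in> V")
    case False
    then have "?A = {}" using sg unfolding simple_graph_def by blast
    then show ?thesis by (metis card.empty zero_le)
  next
    case True
    have inj: "inj_on f V" using bij bij_betw_def by blast
    have fx: "f x \<noteq> f c" using inj x True c inj_on_eq_iff by metis
    let ?B = "{y. cube_E n (f x) y \<and> (y = f c \<or> cube_E n y (f c))}"
    have sub: "f ` ?A \<subseteq> ?B"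
    proof
      fix y assume "y \<in> f ` ?A"
      then obtain v where v: "v \<in> ?A" "y = f v" by blast
      have "v \<in> V" using v AV by blast
      then show "y \<in> ?B" using v Eiff[of x v] Eiff[of v c] x True unfolding induced_E_def by auto
    qed
    have injA: "inj_on f ?A" using inj AV inj_on_subset by blast
    have "card ?A = card (f ` ?A)" using card_image[OF injA] by simp
    also have "\<dots> \<le> card ?B" using cube_common[OF fx, of n] sub by (intro card_mono) simp_all
    also have "\<dots> \<le> 2" using cube_common[OF fx, of n] by simp
    finally show ?thesis .
  qed
qed

lemma escape:
  assumes sg: "simple_graph V E" and pc: "partial_cube V E" and x: "x \<in> V"
    and P: "\<forall>i<k. P i \<noteq> x" and deg: "2*k < degree V E x"
  shows "\<exists>v. E x v \<and> (\<forall>i<k. P i \<noteq> v \<and> \<not> E v (P i))"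
proof (rule ccontr)
  assume "\<not> ?thesis"
  hence sub: "{w\<in>V. E x w} \<subseteq> (\<Union>i\<in>{..<k}. {v. E x v \<and> (v = P i \<or> E v (P i))})" by blast
  have finV: "finite V" using sg simple_graph_def by blast
  have fin: "finite (\<Union>i\<in>{..<k}. {v. E x v \<and> (v = P i \<or> E v (P i))})"
  proof (rule finite_subset[OF _ finV])
    show "(\<Union>i\<in>{..<k}. {v. E x v \<and> (v = P i \<or> E v (P i))}) \<subseteq> V"
      using sg unfolding simple_graph_def by blast
  qed
  have "degree V E x \<le> card (\<Union>i\<in>{..<k}. {v. E x v \<and> (v = P i \<or> E v (P i))})"
    unfolding degree_def using sub fin by (rule card_mono[rotated])
  also have "\<dots> \<le> (\<Sum>i\<in>{..<k}. card {v. E x v \<and> (v = P i \<or> E v (P i))})"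
    by (rule card_UN_le) simp
  also have "\<dots> \<le> (\<Sum>i\<in>{..<k}. 2)"
    by (rule sum_mono) (use pc_common[OF sg pc x] P in auto)
  also have "\<dots> = 2 * k" by simp
  finally show False using deg by simp
qed


fun hist :: "('a \<Rightarrow> (nat \<Rightarrow> 'a) \<Rightarrow> 'a) \<Rightarrow> ('a list \<Rightarrow> nat \<Rightarrow> 'a) \<Rightarrow> 'a \<Rightarrow> nat \<Rightarrow> 'a list" where
  "hist g \<sigma> r0 0 = [r0]"
| "hist g \<sigma> r0 (Suc t) = hist g \<sigma> r0 t @ [g (last (hist g \<sigma> r0 t)) (\<sigma> (hist g \<sigma> r0 t))]"

lemma hist_len: "length (hist g \<sigma> r0 t) = Suc t"
  by (induction t) auto

lemma hist_mono: "t \<le> t' \<Longrightarrow> j \<le> t \<Longrightarrow> hist g \<sigma> r0 t' ! j = hist g \<sigma> r0 t ! j"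
proof (induction t' rule: dec_induct)
  case base then show ?case by simp
next
  case (step n)
  then show ?case by (simp add: nth_append hist_len)
qed

definition rob where "rob g \<sigma> r0 t = hist g \<sigma> r0 t ! t"

lemma rob_hist: "map (rob g \<sigma> r0) [0..<Suc t] = hist g \<sigma> r0 t"
proof (rule nth_equalityI)
  show "length (map (rob g \<sigma> r0) [0..<Suc t]) = length (hist g \<sigma> r0 t)" by (simp add: hist_len)
  fix j assume "j < length (map (rob g \<sigma> r0) [0..<Suc t])"
  then have j: "j \<le> t" by simp
  then have "[0..<Suc t] ! j = j" by (simp del: upt_Suc)
  then show "map (rob g \<sigma> r0) [0..<Suc t] ! j = hist g \<sigma> r0 t ! j"
    using j hist_mono[of j t j g \<sigma> r0] by (simp add: rob_def del: upt_Suc)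
qed

lemma rob_0: "rob g \<sigma> r0 0 = r0" by (simp add: rob_def)

lemma rob_Suc: "rob g \<sigma> r0 (Suc t) = g (rob g \<sigma> r0 t) (\<sigma> (map (rob g \<sigma> r0) [0..<Suc t]))"
proof -
  have "last (hist g \<sigma> r0 t) = rob g \<sigma> r0 t"
    unfolding rob_def using hist_len[of g \<sigma> r0 t]
    by (metis diff_Suc_1 last_conv_nth list.size(3) nat.distinct(1))
  then show ?thesis unfolding rob_hist by (simp add: rob_def nth_append hist_len)
qed

lemma no_win:
  assumes sg: "simple_graph V E" and pc: "partial_cube V E" and dk: "2*k < min_degree V E"
  shows "\<not> cops_win V E k"
proof
  assume "cops_win V E k"
  then obtain c0 \<sigma> where W: "cops_winning_strategy V E k c0 \<sigma>" unfolding cops_win_def by blast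
  have finV: "finite V" using sg unfolding simple_graph_def by blast
  have Vne: "V \<noteq> {}" using pc unfolding partial_cube_def connected_graph_def by blast
  have sym: "\<And>u v. E u v \<Longrightarrow> E v u" and inV: "\<And>u v. E u v \<Longrightarrow> u \<in> V \<and> v \<in> V"
    using sg unfolding simple_graph_def by blast+
  have degx: "2*k < degree V E x" if "x \<in> V" for x
  proof -
    have "min_degree V E \<le> degree V E x" unfolding min_degree_def using finV that by (intro Min_le) auto
    then show ?thesis using dk by simp
  qed
  obtain x0 where x0: "x0 \<in> V" using Vne by blast
  have "degree V E x0 \<le> card V" unfolding degree_def using finV by (intro card_mono) auto
  hence kV: "k < card V" using degx[OF x0] by simp
  have "card (c0 ` {..<k}) \<le> k" using card_image_le[of "{..<k}" c0] by simp
  hence "\<not> V \<subseteq> c0 ` {..<k}" using kV card_mono[of "c0 ` {..<k}" V] by auto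
  then obtain x where x: "x \<in> V" "\<forall>i<k. c0 i \<noteq> x" by blast
  define good where "good y P v \<longleftrightarrow> E y v \<and> (\<forall>i<k. P i \<noteq> v \<and> \<not> E v (P i))" for y P v
  define g where "g y P = (if \<exists>v. good y P v then SOME v. good y P v else y)" for y P
  have g_good: "good y P (g y P)" if "\<exists>v. good y P v" for y P
    using that someI_ex[OF that] unfolding g_def by simp
  have g_step: "step V E y (g y P)" if "y \<in> V" for y P
  proof (cases "\<exists>v. good y P v")
    case True
    then show ?thesis using g_good[OF True] that unfolding step_def good_def by blast
  next
    case False
    have "g y P = y" unfolding g_def by (rule if_not_P[OF False])
    then show ?thesis using that unfolding step_def by simp
  qed
  define r0 where "r0 = g x c0"
  have r0g: "good x c0 r0"
    using escape[OF sg pc x(1) x(2) degx[OF x(1)]] g_good unfolding r0_def good_def by blast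
  define R where "R = rob g \<sigma> r0"
  let ?C = "cop_pos E c0 \<sigma> R"
  have R0: "R 0 = r0" unfolding R_def by (simp add: rob_0)
  have RS: "R (Suc t) = g (R t) (?C (Suc t))" for t
    unfolding R_def by (simp only: rob_Suc cop_pos.simps)
  have C0: "?C 0 = c0" by simp
  have RV: "R t \<in> V" for t
  proof (induction t)
    case 0 then show ?case using R0 r0g inV unfolding good_def by blast
  next
    case (Suc t)
    have "step V E (R t) (R (Suc t))" using g_step[OF Suc, of "?C (Suc t)"] RS[of t] by simp
    then have "R (Suc t) = R t \<or> E (R t) (R (Suc t))" unfolding step_def by blast
    then show ?case using inV Suc by metis
  qed
  have legal: "robber_legal V E R" unfolding robber_legal_def using RV g_step RS by simp
  have W2: "(\<forall>t. \<forall>i<k. step V E (?C t i) (?C (Suc t) i)) \<and>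
        (\<exists>t. \<exists>i<k. ?C t i = R t \<or> ?C (Suc t) i = R t)"
    using mp[OF spec[OF conjunct2[OF W[unfolded cops_winning_strategy_def]], of R] legal] .
  have cl: "\<And>t i. i<k \<Longrightarrow> step V E (?C t i) (?C (Suc t) i)" using conjunct1[OF W2] by blast
  have cap: "\<exists>t. \<exists>i<k. ?C t i = R t \<or> ?C (Suc t) i = R t" using conjunct2[OF W2] .
  have noadj: "\<forall>i<k. ?C (Suc t) i \<noteq> R t"
    if B: "\<forall>i<k. ?C t i \<noteq> R t \<and> \<not> E (R t) (?C t i)" for t
  proof (intro allI impI)
    fix i assume i: "i < k"
    have st: "?C (Suc t) i = ?C t i \<or> E (?C t i) (?C (Suc t) i)" using cl[OF i, of t] unfolding step_def by blast
    have b1: "?C t i \<noteq> R t" and b2: "\<not> E (R t) (?C t i)" using B i by auto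
    show "?C (Suc t) i \<noteq> R t"
    proof
      assume e: "?C (Suc t) i = R t"
      from st show False
      proof
        assume "?C (Suc t) i = ?C t i" then show False using e b1 by simp
      next
        assume "E (?C t i) (?C (Suc t) i)" then have "E (R t) (?C t i)" using e sym by simp
        then show False using b2 by simp
      qed
    qed
  qed
  have B: "\<forall>i<k. ?C t i \<noteq> R t \<and> \<not> E (R t) (?C t i)" for t
  proof (induction t)
    case 0 then show ?case using r0g R0 C0 unfolding good_def by simp
  next
    case (Suc t)
    have "\<exists>v. good (R t) (?C (Suc t)) v"
      using escape[OF sg pc RV[of t] noadj[OF Suc] degx[OF RV[of t]]] unfolding good_def by blast
    then have "good (R t) (?C (Suc t)) (R (Suc t))" using g_good RS by simp
    then show ?case unfolding good_def by blast
  qed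
  from cap obtain t i where i: "i < k" and "?C t i = R t \<or> ?C (Suc t) i = R t" by blast
  then show False using B[of t] noadj[OF B[of t]] by blast
qed

lemma win_exists:
  assumes "finite V" shows "cops_win V E (card V)"
proof -
  obtain h where h: "bij_betw h {0..<card V} V" using ex_bij_betw_nat_finite[OF assms] by blast
  have hsurj: "h ` {0..<card V} = V" using h unfolding bij_betw_def by (rule conjunct2)
  have hV: "\<And>i. i < card V \<Longrightarrow> h i \<in> V" using hsurj by auto
  have Cc: "cop_pos E h (\<lambda>_. h) R t = h" for R t by (cases t) simp_all
  have A: "\<forall>t. \<forall>i<card V. step V E (cop_pos E h (\<lambda>_. h) R t i) (cop_pos E h (\<lambda>_. h) R (Suc t) i)" for R
    using hV unfolding Cc step_def by blast
  have B: "\<exists>t. \<exists>i<card V. cop_pos E h (\<lambda>_. h) R t i = R t \<or> cop_pos E h (\<lambda>_. h) R (Suc t) i = R t"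
    if R: "robber_legal V E R" for R
  proof -
    have "R 0 \<in> V" using R robber_legal_def by blast
    then have "R 0 \<in> h ` {0..<card V}" using hsurj by simp
    then obtain i where "i < card V" "h i = R 0" by auto
    then show ?thesis unfolding Cc by blast
  qed
  have "cops_winning_strategy V E (card V) h (\<lambda>_. h)"
    unfolding cops_winning_strategy_def using hV A B by blast
  then show ?thesis unfolding cops_win_def by blast
qed

theorem theorem3p2:
  fixes V :: "'a set" and E :: "'a \<Rightarrow> 'a \<Rightarrow> bool"
  assumes "simple_graph V E"
    and "partial_cube V E"
  shows "of_nat (cop_number V E) \<ge> \<lceil>real (min_degree V E) / 2\<rceil>"
proof -
  have "finite V" using assms(1) unfolding simple_graph_def by blast
  then have "cops_win V E (card V)" by (rule win_exists)
  then have "cops_win V E (cop_number V E)" unfolding cop_number_def by (rule LeastI)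
  then have "\<not> 2 * cop_number V E < min_degree V E" using no_win[OF assms] by blast
  then have "real (min_degree V E) / 2 \<le> real (cop_number V E)" by linarith
  then show ?thesis by (simp add: ceiling_le_iff)
qed

end
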